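(* Let $X\in\mathbb{R}^{n\times p}$, $\lambda>0$, $\varepsilon>0$, and let $y$ be a random vector in $\mathbb{R}^n$ whose distribution is absolutely continuous with respect to Lebesgue measure on $\mathbb{R}^n$. If $(\hat\beta_0,\hat\beta^+,\hat\beta^-,\hat\Theta)$ solves the weak hierarchical lasso with elastic net penalty $\varepsilon$ (defined in the context), then with probability one weak hierarchy holds: for all $j\neq k$, $$\frac{\hat\Theta_{jk}+\hat\Theta_{kj}}{2}\neq0\implies \hat\beta^+_j-\hat\beta^-_j\neq0\ \text{ or }\ \hat\beta^+_k-\hat\beta^-_k\neq0.$$
   Context: For $\Theta\in\mathbb{R}^{p\times p}$, $\Theta_j$ is its $j$th row, $\|\Theta\|_1=\sum_{j\ne k}|\Theta_{jk}|$, $\|\Theta\|_F$ the Frobenius norm; $X_{i\cdot}$ is the $i$th row of $X$ and $\mathbf 1$ the all-ones vector. The loss is $q(\beta_0,\beta^+,\beta^-,\Theta)=\frac12\sum_{i=1}^n\big(y_i-\beta_0-X_{i\cdot}(\beta^+-\beta^-)-\frac12X_{i\cdot}\Theta X_{i\cdot}^T\big)^2+\frac{\varepsilon}{2}\big(\|\Theta\|_F^2+\|\beta^+\|^2+\|\beta^-\|^2\big)$. The weak hierarchical lasso with elastic net penalty $\varepsilon$ is: minimize over $\beta_0\in\mathbb{R}$, $\beta^\pm\in\mathbb{R}^p$, $\Theta\in\mathbb{R}^{p\times p}$ with $\Theta_{jj}=0$ for all $j$ (no symmetry required), the objective $q(\beta_0,\beta^+,\beta^-,\Theta)+\lambda\mathbf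 1^T(\beta^++\beta^-)+\frac{\lambda}{2}\|\Theta\|_1$ subject to, for each $j$, $\|\Theta_j\|_1\le\beta^+_j+\beta^-_j$, $\beta^+_j\ge0$, $\beta^-_j\ge0$. *)

theory Defs
  imports "HOL-Analysis.Analysis" "HOL-Probability.Probability"
begin

text \<open>Design matrix X has rows X$i (i ranging over the finite type 'n, n observations),
  each a vector in real^'p. Theta is a p x p matrix, Theta$j is its j-th row.\<close>

definition Theta_l1 :: "real^'p^'p \<Rightarrow> real" where
  "Theta_l1 Th = (\<Sum>j\<in>UNIV. \<Sum>k\<in>UNIV - {j}. \<bar>Th$j$k\<bar>)"

definition row_l1 :: "real^'p \<Rightarrow> real" where
  "row_l1 v = (\<Sum>k\<in>UNIV. \<bar>v$k\<bar>)"

definition frob_sq :: "real^'p^'p \<Rightarrow> real" where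
  "frob_sq Th = (\<Sum>j\<in>UNIV. \<Sum>k\<in>UNIV. (Th$j$k)\<^sup>2)"

definition whl_loss ::
  "real^'p^'n \<Rightarrow> real \<Rightarrow> real^'n \<Rightarrow> real \<Rightarrow> real^'p \<Rightarrow> real^'p \<Rightarrow> real^'p^'p \<Rightarrow> real" where
  "whl_loss X eps y b0 bp bm Th =
     (1/2) * (\<Sum>i\<in>UNIV. (y$i - b0 - (X$i) \<bullet> (bp - bm) - (1/2) * ((X$i) \<bullet> (Th *v (X$i))))\<^sup>2)
     + (eps/2) * (frob_sq Th + (norm bp)\<^sup>2 + (norm bm)\<^sup>2)"

definition whl_objective ::
  "real^'p^'n \<Rightarrow> real \<Rightarrow> real \<Rightarrow> real^'n \<Rightarrow> real \<Rightarrow> real^'p \<Rightarrow> real^'p \<Rightarrow> real^'p^'p \<Rightarrow> real" where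
  "whl_objective X lam eps y b0 bp bm Th =
     whl_loss X eps y b0 bp bm Th + lam * (\<Sum>j\<in>UNIV. bp$j + bm$j) + (lam/2) * Theta_l1 Th"

definition whl_feasible :: "real^'p \<Rightarrow> real^'p \<Rightarrow> real^'p^'p \<Rightarrow> bool" where
  "whl_feasible bp bm Th \<longleftrightarrow>
     (\<forall>j. Th$j$j = 0) \<and>
     (\<forall>j. row_l1 (Th$j) \<le> bp$j + bm$j \<and> bp$j \<ge> 0 \<and> bm$j \<ge> 0)"

definition whl_solution ::
  "real^'p^'n \<Rightarrow> real \<Rightarrow> real \<Rightarrow> real^'n \<Rightarrow> real \<Rightarrow> real^'p \<Rightarrow> real^'p \<Rightarrow> real^'p^'p \<Rightarrow> bool" where
  "whl_solution X lam eps y b0 bp bm Th \<longleftrightarrow>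
     whl_feasible bp bm Th \<and>
     (\<forall>c0 cp cm Ch. whl_feasible cp cm Ch \<longrightarrow>
        whl_objective X lam eps y b0 bp bm Th \<le> whl_objective X lam eps y c0 cp cm Ch)"

definition weak_hierarchy :: "real^'p \<Rightarrow> real^'p \<Rightarrow> real^'p^'p \<Rightarrow> bool" where
  "weak_hierarchy bp bm Th \<longleftrightarrow>
     (\<forall>j k. j \<noteq> k \<longrightarrow> (Th$j$k + Th$k$j) / 2 \<noteq> 0 \<longrightarrow>
        bp$j - bm$j \<noteq> 0 \<or> bp$k - bm$k \<noteq> 0)"

end

theory Submission
  imports Defs
begin

lemma null_line:
  fixes C :: "'a::euclidean_space set"
  assumes cl: "closed C" and u: "u \<noteq> 0"
    and line: "\<And>y s. y \<in> C \<Longrightarrow> y + s *\<^sub>R u \<in> C \<Longrightarrow> s = 0"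
  shows "C \<in> null_sets lborel"
proof -
  have "C \<inter> cball 0 (real R) \<in> null_sets lborel" for R :: nat
  proof -
    define A where "A = C \<inter> cball 0 (real R)"
    have Aborel: "A \<in> sets lborel" unfolding A_def using cl by (auto intro: borel_closed)
    define v where "v k = (1 / (real k + 1)) *\<^sub>R u" for k :: nat
    define T where "T k = {y. y - v k \<in> A}" for k :: nat
    have Tsets: "T k \<in> sets lborel" for k
    proof -
      have "(\<lambda>y. y - v k) \<in> borel_measurable borel"
        by (intro borel_measurable_continuous_onI continuous_intros)
      hence "(\<lambda>y. y - v k) -` A \<in> sets borel"
        using Aborel by (metis measurable_sets sets_lborel space_borel inf_top.right_neutral vimage_Int)
      thus ?thesis by (simp add: T_def vimage_def)
    qed
    have Tmeas: "emeasure lborel (T k) = emeasure lborel A" for k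
    proof -
      have "emeasure lborel (T k) = emeasure (distr lborel borel ((+) (v k))) (T k)"
        by (simp add: lborel_distr_plus)
      also have "\<dots> = emeasure lborel ((+) (v k) -` T k)"
        using Tsets by (subst emeasure_distr) auto
      also have "(+) (v k) -` T k = A" by (auto simp: T_def)
      finally show ?thesis .
    qed
    have disj: "disjoint_family T"
    proof (auto simp: disjoint_family_on_def T_def)
      fix m n y assume mn: "m \<noteq> n" and a: "y - v m \<in> A" and b: "y - v n \<in> A"
      have "y - v n = (y - v m) + (1 / (real m + 1) - 1 / (real n + 1)) *\<^sub>R u"
        by (simp add: v_def algebra_simps)
      hence "y - v m + (1 / (real m + 1) - 1 / (real n + 1)) *\<^sub>R u \<in> C" using b unfolding A_def by (metis IntD1)
      moreover have "y - v m \<in> C" using a unfolding A_def by (metis IntD1)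
      ultimately have "1 / (real m + 1) - 1 / (real n + 1) = 0"
        using line by blast
      hence "real m + 1 = real n + 1"
        by simp
      with mn show False by simp
    qed
    have sub: "(\<Union>k. T k) \<subseteq> cball 0 (real R + norm u)"
    proof (auto simp: T_def A_def)
      fix k y assume "norm (y - v k) \<le> real R"
      moreover have "norm (v k) \<le> norm u"
        by (simp add: v_def field_simps)
      moreover have "norm y \<le> norm (y - v k) + norm (v k)"
        by (metis norm_triangle_sub add.commute)
      ultimately show "norm y \<le> real R + norm u" by linarith
    qed
    have fin: "emeasure lborel (\<Union>k. T k) < \<infinity>"
    proof -
      have "emeasure lborel (\<Union>k. T k) \<le> emeasure lborel (cball (0::'a) (real R + norm u))"
        using sub by (intro emeasure_mono) auto
      thus ?thesis using emeasure_lborel_cball_finite[of "0::'a" "real R + norm u"] by order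
    qed
    have eq: "emeasure lborel (\<Union>k. T k) = (\<Sum>k. emeasure lborel A)"
    proof -
      have "range T \<subseteq> sets lborel" using Tsets by auto
      thus ?thesis using suminf_emeasure[of T lborel] disj Tmeas by simp
    qed
    have "emeasure lborel A = 0"
    proof (cases "emeasure lborel A")
      case (real r)
      have "(\<Sum>k. ennreal r) \<noteq> top" using eq fin real by simp
      hence "summable (\<lambda>_::nat. r)" using real by (intro summable_suminf_not_top) auto
      hence "r = 0" by (simp add: summable_const_iff)
      thus ?thesis using real by simp
    next
      case top
      hence "(\<Sum>k. emeasure lborel A) \<ge> emeasure lborel A"
        by (intro sum_le_suminf[where I="{0}", simplified]) auto
      with eq fin top show ?thesis by simp
    qed
    thus ?thesis using Aborel by (simp add: A_def null_sets_def)
  qed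
  moreover have "C = (\<Union>R::nat. C \<inter> cball 0 (real R))"
    by (auto simp: real_arch_simple)
  ultimately show ?thesis by (metis null_sets_UN)
qed

definition O_mat :: "real^'p^'n \<Rightarrow> 'n \<Rightarrow> real^'p^'p" where
  "O_mat X i = (\<chi> a b. X$i$a * X$i$b)"

definition fitv :: "real^'p^'n \<Rightarrow> real \<Rightarrow> real^'p \<Rightarrow> real^'p \<Rightarrow> real^'p^'p \<Rightarrow> real^'n" where
  "fitv X b0 bp bm Th = (\<chi> i. b0 + inner (X$i) (bp - bm) + (1/2) * inner Th (O_mat X i))"

definition onev :: "real^'n" where "onev = (\<chi> i. 1)"

definition Lpen :: "real \<Rightarrow> real^'p \<Rightarrow> real^'p \<Rightarrow> real^'p^'p \<Rightarrow> real" where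
  "Lpen lam bp bm Th = lam * (\<Sum>j\<in>UNIV. bp$j + bm$j) + (lam/2) * Theta_l1 Th"

lemma quad_form: "(x::real^'p) \<bullet> (Th *v x) = inner Th (\<chi> a b. x$a * x$b)"
  unfolding inner_vec_def matrix_vector_mult_def
  by (simp add: sum_distrib_left mult.assoc mult.left_commute)

lemma frob_sq_norm: "frob_sq Th = (norm Th)^2"
  unfolding frob_sq_def power2_norm_eq_inner inner_vec_def
  by (simp add: power2_eq_square)

lemma norm_sq_vec: "(norm (v::real^'n))^2 = (\<Sum>i\<in>UNIV. (v$i)^2)"
  unfolding power2_norm_eq_inner inner_vec_def by (simp add: power2_eq_square)

lemma loss_eq: "whl_loss X eps y b0 bp bm Th =
   (1/2) * (norm (y - fitv X b0 bp bm Th))^2 + (eps/2) * ((norm Th)^2 + (norm bp)^2 + (norm bm)^2)"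
  unfolding whl_loss_def norm_sq_vec frob_sq_norm fitv_def O_mat_def
  by (simp add: quad_form algebra_simps)

lemma obj_eq: "whl_objective X lam eps y b0 bp bm Th =
   (1/2) * (norm (y - fitv X b0 bp bm Th))^2 + (eps/2) * ((norm Th)^2 + (norm bp)^2 + (norm bm)^2)
   + Lpen lam bp bm Th"
  unfolding whl_objective_def loss_eq Lpen_def by simp

lemma fitv_nth: "fitv X b0 bp bm Th $ i = b0 + inner (X$i) (bp - bm) + (1/2) * inner Th (O_mat X i)"
  by (simp add: fitv_def)

lemma fitv_lin: "fitv X ((1-t)*a0 + t*c0) ((1-t) *\<^sub>R ap + t *\<^sub>R cp) ((1-t) *\<^sub>R am + t *\<^sub>R cm)
     ((1-t) *\<^sub>R aT + t *\<^sub>R cT) = (1-t) *\<^sub>R fitv X a0 ap am aT + t *\<^sub>R fitv X c0 cp cm cT"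
  by (simp add: vec_eq_iff fitv_nth inner_diff_right inner_add_right inner_add_left algebra_simps)

lemma fitv_diff: "fitv X c0 cp cm cT - fitv X a0 ap am aT = (c0 - a0) *\<^sub>R onev + fitv X 0 (cp - ap) (cm - am) (cT - aT)"
  by (simp add: vec_eq_iff fitv_nth onev_def inner_diff_right inner_diff_left algebra_simps)

lemma norm_comb: "(norm ((1-t) *\<^sub>R a + t *\<^sub>R b :: 'a::real_inner))^2
   = (1-t) * (norm a)^2 + t * (norm b)^2 - t*(1-t) * (norm (a - b))^2"
  unfolding power2_norm_eq_inner
  by (simp add: inner_add_left inner_add_right inner_diff_left inner_diff_right inner_commute algebra_simps power2_eq_square)

lemma four_pt: "(1/2) * (norm (a - d))^2 + (1/2) * (norm (b - c))^2 - (1/2) * (norm (a - c))^2 - (1/2) * (norm (b - d))^2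
   = inner (b - a) (d - (c :: 'a::real_inner))"
  unfolding power2_norm_eq_inner
  by (simp add: inner_add_left inner_add_right inner_diff_left inner_diff_right inner_commute algebra_simps)

lemma abs_comb: "0 \<le> t \<Longrightarrow> t \<le> 1 \<Longrightarrow> \<bar>(1-t)*a + t*b\<bar> \<le> (1-t)*\<bar>a\<bar> + t*\<bar>b::real\<bar>"
proof -
  assume t: "0 \<le> t" "t \<le> 1"
  have "\<bar>(1-t)*a + t*b\<bar> \<le> \<bar>(1-t)*a\<bar> + \<bar>t*b\<bar>" by (rule abs_triangle_ineq)
  also have "\<dots> = (1-t)*\<bar>a\<bar> + t*\<bar>b\<bar>" using t by (simp add: abs_mult)
  finally show ?thesis .
qed

lemma row_l1_comb: "0 \<le> t \<Longrightarrow> t \<le> 1 \<Longrightarrow>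
   row_l1 ((1-t) *\<^sub>R a + t *\<^sub>R b) \<le> (1-t) * row_l1 a + t * row_l1 b"
  unfolding row_l1_def by (simp add: sum_distrib_left sum.distrib[symmetric] sum_mono abs_comb)

lemma Theta_l1_comb: "0 \<le> t \<Longrightarrow> t \<le> 1 \<Longrightarrow>
   Theta_l1 ((1-t) *\<^sub>R a + t *\<^sub>R b) \<le> (1-t) * Theta_l1 a + t * Theta_l1 b"
  unfolding Theta_l1_def
  by (simp add: sum_distrib_left sum.distrib[symmetric] sum_mono abs_comb)

lemma Lpen_comb: "0 \<le> t \<Longrightarrow> t \<le> 1 \<Longrightarrow> lam \<ge> 0 \<Longrightarrow>
   Lpen lam ((1-t) *\<^sub>R ap + t *\<^sub>R cp) ((1-t) *\<^sub>R am + t *\<^sub>R cm) ((1-t) *\<^sub>R aT + t *\<^sub>R cT)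
   \<le> (1-t) * Lpen lam ap am aT + t * Lpen lam cp cm cT"
proof -
  assume t: "0 \<le> t" "t \<le> 1" and l: "lam \<ge> 0"
  have s: "(\<Sum>j\<in>UNIV. ((1-t) *\<^sub>R ap + t *\<^sub>R cp)$j + ((1-t) *\<^sub>R am + t *\<^sub>R cm)$j)
     = (1-t) * (\<Sum>j\<in>UNIV. ap$j + am$j) + t * (\<Sum>j\<in>UNIV. cp$j + cm$j)"
    by (simp add: sum_distrib_left sum.distrib[symmetric] algebra_simps)
  have "(lam/2) * Theta_l1 ((1-t) *\<^sub>R aT + t *\<^sub>R cT) \<le> (lam/2) * ((1-t) * Theta_l1 aT + t * Theta_l1 cT)"
    using Theta_l1_comb[OF t] l by (intro mult_left_mono) auto
  moreover define TT where "TT = Theta_l1 ((1-t) *\<^sub>R aT + t *\<^sub>R cT)"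
  ultimately have h: "(lam/2) * TT \<le> (lam/2) * ((1-t) * Theta_l1 aT + t * Theta_l1 cT)" by simp
  have "lam * ((1-t) * (\<Sum>j\<in>UNIV. ap$j + am$j) + t * (\<Sum>j\<in>UNIV. cp$j + cm$j)) + (lam/2) * TT
     \<le> (1-t) * (lam * (\<Sum>j\<in>UNIV. ap$j + am$j) + (lam/2) * Theta_l1 aT) + t * (lam * (\<Sum>j\<in>UNIV. cp$j + cm$j) + (lam/2) * Theta_l1 cT)"
    using h by (simp add: field_simps)
  thus ?thesis unfolding Lpen_def s TT_def[symmetric] .
qed

lemma feas_comb: "0 \<le> t \<Longrightarrow> t \<le> 1 \<Longrightarrow> whl_feasible ap am aT \<Longrightarrow> whl_feasible cp cm cT \<Longrightarrow>
   whl_feasible ((1-t) *\<^sub>R ap + t *\<^sub>R cp) ((1-t) *\<^sub>R am + t *\<^sub>R cm) ((1-t) *\<^sub>R aT + t *\<^sub>R cT)"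
  unfolding whl_feasible_def
proof (intro conjI allI)
  assume t: "0 \<le> t" "t \<le> 1" and A: "(\<forall>j. aT $ j $ j = 0) \<and> (\<forall>j. row_l1 (aT $ j) \<le> ap $ j + am $ j \<and> 0 \<le> ap $ j \<and> 0 \<le> am $ j)"
    and C: "(\<forall>j. cT $ j $ j = 0) \<and> (\<forall>j. row_l1 (cT $ j) \<le> cp $ j + cm $ j \<and> 0 \<le> cp $ j \<and> 0 \<le> cm $ j)"
  fix j
  show "((1 - t) *\<^sub>R aT + t *\<^sub>R cT) $ j $ j = 0" using A C by simp
  have "row_l1 (((1 - t) *\<^sub>R aT + t *\<^sub>R cT) $ j) \<le> (1-t) * row_l1 (aT$j) + t * row_l1 (cT$j)"
    using row_l1_comb[OF t, of "aT$j" "cT$j"] by simp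
  also have "\<dots> \<le> (1-t) * (ap$j + am$j) + t * (cp$j + cm$j)"
    using A C t by (intro add_mono mult_left_mono) auto
  finally show "row_l1 (((1 - t) *\<^sub>R aT + t *\<^sub>R cT) $ j) \<le> ((1 - t) *\<^sub>R ap + t *\<^sub>R cp) $ j + ((1 - t) *\<^sub>R am + t *\<^sub>R cm) $ j"
    by (simp add: algebra_simps)
  show "0 \<le> ((1 - t) *\<^sub>R ap + t *\<^sub>R cp) $ j" using A C t by simp
  show "0 \<le> ((1 - t) *\<^sub>R am + t *\<^sub>R cm) $ j" using A C t by simp
qed

definition Nrm :: "real^'p \<Rightarrow> real^'p \<Rightarrow> real^'p^'p \<Rightarrow> real" where
  "Nrm bp bm Th = (norm Th)^2 + (norm bp)^2 + (norm bm)^2"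

lemma arith1:
  fixes t e A B D a1 a2 a3 b1 b2 b3 d1 d2 d3 L La Lc :: real
  assumes "L \<le> (1-t)*La + t*Lc"
  shows "(1/2)*((1-t)*A + t*B - t*(1-t)*D) + (e/2)*(((1-t)*a1 + t*b1 - t*(1-t)*d1) + ((1-t)*a2 + t*b2 - t*(1-t)*d2)
     + ((1-t)*a3 + t*b3 - t*(1-t)*d3)) + L
   \<le> (1-t)*((1/2)*A + (e/2)*(a1+a2+a3) + La) + t*((1/2)*B + (e/2)*(b1+b2+b3) + Lc)
      - t*(1-t)*((D + e*(d1+d2+d3))/2)"
proof -
  have "(1/2)*((1-t)*A + t*B - t*(1-t)*D) + (e/2)*(((1-t)*a1 + t*b1 - t*(1-t)*d1) + ((1-t)*a2 + t*b2 - t*(1-t)*d2)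
     + ((1-t)*a3 + t*b3 - t*(1-t)*d3)) - ((1-t)*((1/2)*A + (e/2)*(a1+a2+a3)) + t*((1/2)*B + (e/2)*(b1+b2+b3))
      - t*(1-t)*((D + e*(d1+d2+d3))/2)) = 0" by (simp add: field_simps)
  thus ?thesis using assms by (simp add: algebra_simps)
qed

lemma three_point:
  fixes X :: "real^'p^'n"
  assumes lam: "lam \<ge> 0" and sol: "whl_solution X lam eps y a0 ap am aT"
    and fc: "whl_feasible cp cm cT"
  shows "whl_objective X lam eps y c0 cp cm cT \<ge> whl_objective X lam eps y a0 ap am aT
     + (1/2) * ((norm (fitv X c0 cp cm cT - fitv X a0 ap am aT))^2 + eps * Nrm (cp - ap) (cm - am) (cT - aT))"
proof -
  define F where "F = (\<lambda>b0 bp bm Th. whl_objective X lam eps y b0 bp bm Th)"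
  define R where "R = (norm (fitv X c0 cp cm cT - fitv X a0 ap am aT))^2 + eps * Nrm (cp - ap) (cm - am) (cT - aT)"
  have key: "F c0 cp cm cT - F a0 ap am aT \<ge> (1-t) * (R/2)" if t: "0 < t" "t < 1" for t
  proof -
    have t': "0 \<le> t" "t \<le> 1" using t by auto
    have fa: "whl_feasible ap am aT" using sol by (simp add: whl_solution_def)
    have "F a0 ap am aT \<le> F ((1-t)*a0 + t*c0) ((1-t) *\<^sub>R ap + t *\<^sub>R cp) ((1-t) *\<^sub>R am + t *\<^sub>R cm)
     ((1-t) *\<^sub>R aT + t *\<^sub>R cT)"
      using sol feas_comb[OF t' fa fc] by (simp add: whl_solution_def F_def)
    also have "\<dots> \<le> (1-t) * F a0 ap am aT + t * F c0 cp cm cT - t * (1-t) * (R/2)"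
    proof -
      have e1: "y - fitv X ((1-t)*a0 + t*c0) ((1-t) *\<^sub>R ap + t *\<^sub>R cp) ((1-t) *\<^sub>R am + t *\<^sub>R cm)
         ((1-t) *\<^sub>R aT + t *\<^sub>R cT) = (1-t) *\<^sub>R (y - fitv X a0 ap am aT) + t *\<^sub>R (y - fitv X c0 cp cm cT)"
        by (subst fitv_lin) (simp add: algebra_simps)
      have e2: "(y - fitv X a0 ap am aT) - (y - fitv X c0 cp cm cT) = fitv X c0 cp cm cT - fitv X a0 ap am aT"
        by simp
      have n1: "(norm ((1-t) *\<^sub>R aT + t *\<^sub>R cT))^2 = (1-t) * (norm aT)^2 + t * (norm cT)^2 - t*(1-t) * (norm (cT - aT))^2"
        using norm_comb[of t aT cT] by (simp add: norm_minus_commute)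
      have n2: "(norm ((1-t) *\<^sub>R ap + t *\<^sub>R cp))^2 = (1-t) * (norm ap)^2 + t * (norm cp)^2 - t*(1-t) * (norm (cp - ap))^2"
        using norm_comb[of t ap cp] by (simp add: norm_minus_commute)
      have n3: "(norm ((1-t) *\<^sub>R am + t *\<^sub>R cm))^2 = (1-t) * (norm am)^2 + t * (norm cm)^2 - t*(1-t) * (norm (cm - am))^2"
        using norm_comb[of t am cm] by (simp add: norm_minus_commute)
      have n0: "(norm ((1-t) *\<^sub>R (y - fitv X a0 ap am aT) + t *\<^sub>R (y - fitv X c0 cp cm cT)))^2
         = (1-t) * (norm (y - fitv X a0 ap am aT))^2 + t * (norm (y - fitv X c0 cp cm cT))^2
           - t*(1-t) * (norm (fitv X c0 cp cm cT - fitv X a0 ap am aT))^2"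
        using norm_comb[of t "y - fitv X a0 ap am aT" "y - fitv X c0 cp cm cT"] e2 by simp
      have lp: "Lpen lam ((1-t) *\<^sub>R ap + t *\<^sub>R cp) ((1-t) *\<^sub>R am + t *\<^sub>R cm) ((1-t) *\<^sub>R aT + t *\<^sub>R cT)
   \<le> (1-t) * Lpen lam ap am aT + t * Lpen lam cp cm cT" using Lpen_comb[OF t' lam] .
      show ?thesis unfolding F_def obj_eq e1 n0 n1 n2 n3 R_def Nrm_def
        by (rule arith1[OF lp])
    qed
    finally have "t * (F c0 cp cm cT - F a0 ap am aT) \<ge> t * ((1-t) * (R/2))"
      by (simp add: algebra_simps)
    thus ?thesis using t by simp
  qed
  have "F c0 cp cm cT - F a0 ap am aT \<ge> R/2"
  proof (rule ccontr)
    assume "\<not> ?thesis"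
    hence lt: "F c0 cp cm cT - F a0 ap am aT < R/2" by simp
    hence Rpos: "R > 0"
      using key[of "1/2"] by simp
    define d where "d = R/2 - (F c0 cp cm cT - F a0 ap am aT)"
    have dpos: "d > 0" using lt d_def by simp
    define t where "t = min (1/2) (d / R)"
    have t: "0 < t" "t < 1" using dpos Rpos by (auto simp: t_def)
    have "(1-t) * (R/2) \<ge> R/2 - t * R/2" by (simp add: algebra_simps)
    moreover have "t * R \<le> d" using Rpos by (simp add: t_def min_def field_simps split: if_splits)
    ultimately have "(1-t)*(R/2) > F c0 cp cm cT - F a0 ap am aT" using dpos d_def by simp
    with key[OF t] show False by simp
  qed
  thus ?thesis unfolding F_def R_def by linarith
qed

lemma Nrm_swap: "Nrm (a - b) (c - d) (e - f) = Nrm (b - a) (d - c) (f - e)"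
  by (simp add: Nrm_def norm_minus_commute)

lemma mono_sol:
  fixes X :: "real^'p^'n"
  assumes lam: "lam \<ge> 0"
    and s1: "whl_solution X lam eps y1 a0 ap am aT"
    and s2: "whl_solution X lam eps y2 c0 cp cm cT"
  shows "inner (y2 - y1) (fitv X c0 cp cm cT - fitv X a0 ap am aT)
     \<ge> (norm (fitv X c0 cp cm cT - fitv X a0 ap am aT))^2 + eps * Nrm (cp - ap) (cm - am) (cT - aT)"
proof -
  define f1 where "f1 = fitv X a0 ap am aT"
  define f2 where "f2 = fitv X c0 cp cm cT"
  define R where "R = (norm (f2 - f1))^2 + eps * Nrm (cp - ap) (cm - am) (cT - aT)"
  define P1 where "P1 = (eps/2) * ((norm aT)^2 + (norm ap)^2 + (norm am)^2) + Lpen lam ap am aT"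
  define P2 where "P2 = (eps/2) * ((norm cT)^2 + (norm cp)^2 + (norm cm)^2) + Lpen lam cp cm cT"
  have f1: "whl_feasible ap am aT" and f2: "whl_feasible cp cm cT"
    using s1 s2 by (auto simp: whl_solution_def)
  have o1: "whl_objective X lam eps y a0 ap am aT = (1/2) * (norm (y - f1))^2 + P1" for y
    by (simp add: obj_eq f1_def P1_def)
  have o2: "whl_objective X lam eps y c0 cp cm cT = (1/2) * (norm (y - f2))^2 + P2" for y
    by (simp add: obj_eq f2_def P2_def)
  have i1: "(1/2) * (norm (y1 - f2))^2 + P2 \<ge> (1/2) * (norm (y1 - f1))^2 + P1 + R/2"
    using three_point[OF lam s1 f2, of c0] unfolding o1 o2 f1_def[symmetric] f2_def[symmetric] R_def
    by linarith
  have R2: "R = (norm (f1 - f2))^2 + eps * Nrm (ap - cp) (am - cm) (aT - cT)"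
    by (simp add: R_def norm_minus_commute Nrm_swap[of ap cp])
  have i2: "(1/2) * (norm (y2 - f1))^2 + P1 \<ge> (1/2) * (norm (y2 - f2))^2 + P2 + R/2"
    using three_point[OF lam s2 f1, of a0] unfolding o1 o2 f1_def[symmetric] f2_def[symmetric] R2
    by linarith
  have "inner (y2 - y1) (f2 - f1) = (1/2) * (norm (y1 - f2))^2 + (1/2) * (norm (y2 - f1))^2
       - (1/2) * (norm (y1 - f1))^2 - (1/2) * (norm (y2 - f2))^2"
    using four_pt[of y1 f2 y2 f1] by simp
  with i1 i2 have "inner (y2 - y1) (f2 - f1) \<ge> R" by linarith
  thus ?thesis unfolding R_def f1_def f2_def .
qed

lemma proj_bound:
  fixes u e :: "'a::real_inner"
  shows "c^2 * (norm (u - (inner u e / inner e e) *\<^sub>R e))^2 \<le> (norm (c *\<^sub>R u - a *\<^sub>R e))^2"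
proof (cases "e = 0")
  case True thus ?thesis by (simp add: power_mult_distrib)
next
  case False
  define p where "p = inner u u"
  define q where "q = inner u e"
  define r where "r = inner e e"
  have r: "r > 0" using False by (simp add: r_def)
  have l: "(norm (u - (inner u e / inner e e) *\<^sub>R e))^2 = p - q^2 / r"
    unfolding power2_norm_eq_inner p_def q_def r_def using r[unfolded r_def]
    by (simp add: inner_diff_left inner_diff_right inner_commute field_simps power2_eq_square)
  have rr: "(norm (c *\<^sub>R u - a *\<^sub>R e))^2 = c^2 * p - 2*a*c*q + a^2 * r"
    unfolding power2_norm_eq_inner p_def q_def r_def
    by (simp add: inner_diff_left inner_diff_right inner_commute algebra_simps power2_eq_square)
  have "(c^2 * p - 2*a*c*q + a^2 * r) - c^2 * (p - q^2/r) = (a*r - c*q)^2 / r"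
    using r by (simp add: field_simps power2_eq_square)
  moreover have "(a*r - c*q)^2 / r \<ge> 0" using r by simp
  ultimately show ?thesis unfolding l rr by linarith
qed

lemma quant:
  fixes u dy D E e :: "'a::real_inner"
  assumes eps: "eps > 0" and B: "B \<ge> 0" and N: "N \<ge> 0"
    and mono: "inner dy D \<ge> (norm D)^2 + eps * N"
    and EB: "(norm E)^2 \<le> B * N"
    and De: "D = a *\<^sub>R e + E"
    and h: "inner u dy = inner u D"
    and u: "u \<noteq> 0"
  shows "(inner u dy)^2 * (norm (u - (inner u e / inner e e) *\<^sub>R e))^2
     \<le> ((norm u)^2)^2 * (B/eps + 2) * ((norm dy)^2 - (inner u dy)^2 / (norm u)^2)"
proof -
  define t where "t = inner u dy"
  define U where "U = (norm u)^2"
  have U: "U > 0" using u by (simp add: U_def)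
  have Uin: "inner u u = U" by (simp add: U_def power2_norm_eq_inner)
  define p where "p = D - (t/U) *\<^sub>R u"
  define q where "q = dy - D"
  define w where "w = dy - (t/U) *\<^sub>R u"
  have uq: "inner u q = 0" using h by (simp add: q_def inner_diff_right t_def)
  have up: "inner u p = 0" using h U by (simp add: p_def inner_diff_right t_def Uin)
  have wpq: "w = p + q" by (simp add: w_def p_def q_def)
  have "inner dy D - (norm D)^2 = inner q D"
    by (simp add: q_def inner_diff_left power2_norm_eq_inner)
  also have "D = (t/U) *\<^sub>R u + p" by (simp add: p_def)
  hence "inner q D = inner q p" using uq by (simp add: inner_add_right inner_commute)
  finally have qp: "eps * N \<le> inner q p" using mono by linarith
  have nw: "(norm w)^2 = (norm p)^2 + 2 * inner p q + (norm q)^2"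
    unfolding wpq power2_norm_eq_inner by (simp add: inner_add_left inner_add_right inner_commute)
  have pq: "inner p q = inner q p" by (rule inner_commute)
  have eN: "eps * N \<ge> 0" using eps N by simp
  have z1: "(norm q)^2 \<ge> 0" "(norm p)^2 \<ge> 0" by simp_all
  have pw: "(norm p)^2 \<le> (norm w)^2" using nw qp eN pq z1 by linarith
  have Nw: "eps * N \<le> (norm w)^2 / 2" using nw qp pq z1 by linarith
  have EBw: "(norm E)^2 \<le> B / eps * ((norm w)^2 / 2)"
  proof -
    have "N \<le> ((norm w)^2 / 2) / eps" using Nw eps by (simp add: field_simps)
    hence "B * N \<le> B * (((norm w)^2 / 2) / eps)" using B by (rule mult_left_mono)
    thus ?thesis using EB by (simp add: field_simps)
  qed
  have ep: "(t/U) *\<^sub>R u - a *\<^sub>R e = E - p" using De by (simp add: p_def algebra_simps)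
  have par: "(norm (E - p))^2 \<le> 2 * (norm E)^2 + 2 * (norm p)^2"
  proof -
    have "(norm (E - p))^2 + (norm (E + p))^2 = 2 * (norm E)^2 + 2 * (norm p)^2"
      unfolding power2_norm_eq_inner by (simp add: inner_add_left inner_add_right inner_diff_left inner_diff_right inner_commute)
    moreover have "(norm (E + p))^2 \<ge> 0" by simp
    ultimately show ?thesis by linarith
  qed
  have k: "(t/U)^2 * (norm (u - (inner u e / inner e e) *\<^sub>R e))^2 \<le> (B/eps + 2) * (norm w)^2"
  proof -
    have "(t/U)^2 * (norm (u - (inner u e / inner e e) *\<^sub>R e))^2 \<le> (norm (E - p))^2"
      using proj_bound[of "t/U" u e a] ep by simp
    also have "\<dots> \<le> 2 * (B / eps * ((norm w)^2 / 2)) + 2 * (norm w)^2" using par EBw pw by linarith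
    also have "\<dots> = (B/eps + 2) * (norm w)^2" by (simp add: algebra_simps)
    finally show ?thesis .
  qed
  have nw2: "(norm w)^2 = (norm dy)^2 - t^2 / U"
    unfolding w_def power2_norm_eq_inner using U
    by (simp add: inner_diff_left inner_diff_right inner_commute Uin t_def field_simps power2_eq_square)
  define \<kappa> where "\<kappa> = (norm (u - (inner u e / inner e e) *\<^sub>R e))^2"
  have "U^2 * ((t/U)^2 * \<kappa>) \<le> U^2 * ((B/eps + 2) * (norm w)^2)"
    using k unfolding \<kappa>_def by (intro mult_left_mono) auto
  moreover have "U^2 * ((t/U)^2 * \<kappa>) = t^2 * \<kappa>" using U by (simp add: field_simps power2_eq_square)
  ultimately have "t^2 * \<kappa> \<le> U^2 * (B/eps + 2) * (norm w)^2" by (simp add: mult.assoc)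
  thus ?thesis unfolding nw2 t_def[symmetric] U_def[symmetric] \<kappa>_def[symmetric] .
qed

definition Bc :: "real^'p^'n \<Rightarrow> real" where
  "Bc X = (\<Sum>i\<in>UNIV. 3 * ((norm (X$i))^2 + (norm (O_mat X i))^2))"

lemma cs2: "(inner x y)^2 \<le> (norm x)^2 * (norm (y::'a::real_inner))^2"
  using Cauchy_Schwarz_ineq[of x y] by (simp add: power2_norm_eq_inner)

lemma sq3: "(p + q + r)^2 \<le> 3 * (p^2 + q^2 + (r::real)^2)"
proof -
  have "0 \<le> (p - q)^2 + (q - r)^2 + (p - r)^2" by simp
  thus ?thesis by (simp add: power2_eq_square algebra_simps)
qed

lemma ebound: "(norm (fitv X 0 bp bm Th))^2 \<le> Bc X * Nrm bp bm Th"
proof -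
  have c: "(fitv X 0 bp bm Th $ i)^2 \<le> 3 * ((norm (X$i))^2 + (norm (O_mat X i))^2) * Nrm bp bm Th" for i
  proof -
    define a where "a = (norm (X$i))^2"
    define ob where "ob = (norm (O_mat X i))^2"
    have "(fitv X 0 bp bm Th $ i)^2 = (inner (X$i) bp + (- inner (X$i) bm) + (1/2) * inner Th (O_mat X i))^2"
      by (simp add: fitv_nth inner_diff_right)
    also have "\<dots> \<le> 3 * ((inner (X$i) bp)^2 + (inner (X$i) bm)^2 + (1/4) * (inner Th (O_mat X i))^2)"
      using sq3[of "inner (X$i) bp" "- inner (X$i) bm" "(1/2) * inner Th (O_mat X i)"]
      by (simp add: power_mult_distrib power2_eq_square)
    also have "\<dots> \<le> 3 * (a * (norm bp)^2 + a * (norm bm)^2 + (1/4) * (ob * (norm Th)^2))"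
      using cs2[of "X$i" bp] cs2[of "X$i" bm] cs2[of "O_mat X i" Th]
      by (simp add: a_def ob_def inner_commute[of Th])
    also have "\<dots> \<le> 3 * (a + ob) * Nrm bp bm Th"
    proof -
      have "a \<ge> 0" "ob \<ge> 0" "(norm bp)^2 \<ge> 0" "(norm bm)^2 \<ge> 0" "(norm Th)^2 \<ge> 0"
        by (simp_all add: a_def ob_def)
      hence "a * (norm bp)^2 + a * (norm bm)^2 + (1/4) * (ob * (norm Th)^2)
         \<le> (a + ob) * ((norm Th)^2 + (norm bp)^2 + (norm bm)^2)"
        by (simp add: algebra_simps add_increasing mult_nonneg_nonneg)
      hence "3 * (a * (norm bp)^2 + a * (norm bm)^2 + (1/4) * (ob * (norm Th)^2))
         \<le> 3 * ((a + ob) * ((norm Th)^2 + (norm bp)^2 + (norm bm)^2))" by simp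
      thus ?thesis by (metis Nrm_def mult.assoc)
    qed
    finally show ?thesis by (simp add: a_def ob_def)
  qed
  have "(norm (fitv X 0 bp bm Th))^2 = (\<Sum>i\<in>UNIV. (fitv X 0 bp bm Th $ i)^2)"
    by (rule norm_sq_vec)
  also have "\<dots> \<le> (\<Sum>i\<in>UNIV. 3 * ((norm (X$i))^2 + (norm (O_mat X i))^2) * Nrm bp bm Th)"
    by (rule sum_mono) (rule c)
  also have "\<dots> = Bc X * Nrm bp bm Th" by (simp add: Bc_def sum_distrib_right)
  finally show ?thesis .
qed

lemma Bc_nonneg: "Bc X \<ge> 0" unfolding Bc_def by (intro sum_nonneg) simp

lemma Nrm_nonneg: "Nrm a b c \<ge> 0" unfolding Nrm_def by simp

definition colv :: "real^'p^'n \<Rightarrow> 'p \<Rightarrow> real^'n" where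
  "colv X m = (\<chi> i. X$i$m)"

definition nconst :: "real^'p^'n \<Rightarrow> 'p \<Rightarrow> bool" where
  "nconst X m \<longleftrightarrow> colv X m \<noteq> (inner (colv X m) onev / inner (onev::real^'n) onev) *\<^sub>R onev"

definition Zset :: "real^'p^'n \<Rightarrow> real \<Rightarrow> real \<Rightarrow> 'p \<Rightarrow> (real^'n) set" where
  "Zset X lam eps m = {y. \<exists>b0 bp bm Th. whl_solution X lam eps y b0 bp bm Th \<and>
      inner (colv X m) (y - fitv X b0 bp bm Th) = 0}"

definition Gf :: "real^'p^'n \<Rightarrow> real \<Rightarrow> 'p \<Rightarrow> real^'n \<Rightarrow> real" where
  "Gf X eps m dy = ((norm (colv X m))^2)^2 * (Bc X/eps + 2) * ((norm dy)^2 - (inner (colv X m) dy)^2 / (norm (colv X m))^2)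
     - (inner (colv X m) dy)^2 * (norm (colv X m - (inner (colv X m) onev / inner (onev::real^'n) onev) *\<^sub>R onev))^2"

lemma nconst_ne0: "nconst X m \<Longrightarrow> colv X m \<noteq> 0"
  unfolding nconst_def by auto

lemma Z_pair:
  fixes X :: "real^'p^'n"
  assumes lam: "lam \<ge> 0" and eps: "eps > 0" and nc: "nconst X m"
    and y1: "y1 \<in> Zset X lam eps m" and y2: "y2 \<in> Zset X lam eps m"
  shows "Gf X eps m (y2 - y1) \<ge> 0"
proof -
  obtain a0 ap am aT where s1: "whl_solution X lam eps y1 a0 ap am aT"
    and h1: "inner (colv X m) (y1 - fitv X a0 ap am aT) = 0" using y1 by (auto simp: Zset_def)
  obtain c0 cp cm cT where s2: "whl_solution X lam eps y2 c0 cp cm cT"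
    and h2: "inner (colv X m) (y2 - fitv X c0 cp cm cT) = 0" using y2 by (auto simp: Zset_def)
  have q: "(inner (colv X m) (y2 - y1))^2 * (norm (colv X m - (inner (colv X m) onev / inner (onev::real^'n) onev) *\<^sub>R onev))^2
     \<le> ((norm (colv X m))^2)^2 * (Bc X/eps + 2) * ((norm (y2 - y1))^2 - (inner (colv X m) (y2 - y1))^2 / (norm (colv X m))^2)"
  proof (rule quant[OF eps Bc_nonneg Nrm_nonneg mono_sol[OF lam s1 s2] ebound])
    show "fitv X c0 cp cm cT - fitv X a0 ap am aT = (c0 - a0) *\<^sub>R onev + fitv X 0 (cp - ap) (cm - am) (cT - aT)"
      by (rule fitv_diff)
    show "inner (colv X m) (y2 - y1) = inner (colv X m) (fitv X c0 cp cm cT - fitv X a0 ap am aT)"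
      using h1 h2 by (simp add: inner_diff_right)
    show "colv X m \<noteq> 0" using nconst_ne0[OF nc] .
  qed
  thus ?thesis unfolding Gf_def by simp
qed

lemma Z_null:
  fixes X :: "real^'p^'n"
  assumes lam: "lam \<ge> 0" and eps: "eps > 0" and nc: "nconst X m"
  shows "closure (Zset X lam eps m) \<in> null_sets lborel"
proof (rule null_line[OF closed_closure nconst_ne0[OF nc]])
  fix y s assume a: "y \<in> closure (Zset X lam eps m)" "y + s *\<^sub>R colv X m \<in> closure (Zset X lam eps m)"
  let ?Z = "Zset X lam eps m"
  have "Gf X eps m (snd p - fst p) \<ge> 0" if "p \<in> closure (?Z \<times> ?Z)" for p
  proof (rule continuous_ge_on_closure[OF _ that])
    show "continuous_on (closure (?Z \<times> ?Z)) (\<lambda>p. Gf X eps m (snd p - fst p))"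
      unfolding Gf_def by (intro continuous_intros) (use nconst_ne0[OF nc] in auto)
    show "\<And>p. p \<in> ?Z \<times> ?Z \<Longrightarrow> 0 \<le> Gf X eps m (snd p - fst p)"
      using Z_pair[OF lam eps nc] by auto
  qed
  from this[of "(y, y + s *\<^sub>R colv X m)"] a
  have g: "Gf X eps m (s *\<^sub>R colv X m) \<ge> 0" by (simp add: closure_Times)
  define U where "U = (norm (colv X m))^2"
  define k where "k = (norm (colv X m - (inner (colv X m) onev / inner (onev::real^'n) onev) *\<^sub>R onev))^2"
  have U: "U > 0" using nconst_ne0[OF nc] by (simp add: U_def)
  have k: "k > 0" using nc by (simp add: k_def nconst_def)
  have i: "inner (colv X m) (s *\<^sub>R colv X m) = s * U" by (simp add: U_def power2_norm_eq_inner)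
  have n: "(norm (s *\<^sub>R colv X m))^2 = s^2 * U" by (simp add: U_def power_mult_distrib)
  have "(norm (s *\<^sub>R colv X m))^2 - (inner (colv X m) (s *\<^sub>R colv X m))^2 / U = 0"
    unfolding i n using U by (simp add: power2_eq_square field_simps)
  hence "Gf X eps m (s *\<^sub>R colv X m) = 0 - ((s * U)^2 * k)"
    unfolding Gf_def U_def[symmetric] k_def[symmetric] i by simp
  with g have "(s * U)^2 * k \<le> 0" by simp
  hence "(s * U)^2 = 0" using k by (simp add: mult_le_0_iff)
  thus "s = 0" using U by simp
qed

lemma axis_comp: "axis j x $ a = (if a = j then x else 0)"
  by (simp add: axis_def)

lemma sum_upd: "finite A \<Longrightarrow> b \<in> A \<Longrightarrow> (\<And>k. k \<in> A \<Longrightarrow> k \<noteq> b \<Longrightarrow> g k = f k) \<Longrightarrow>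
   sum g A = sum f A - f b + (g b :: real)"
proof -
  assume A: "finite A" and b: "b \<in> A" and gf: "\<And>k. k \<in> A \<Longrightarrow> k \<noteq> b \<Longrightarrow> g k = f k"
  have "sum g A = g b + sum g (A - {b})" using sum.remove[OF A b] .
  also have "sum g (A - {b}) = sum f (A - {b})" using gf by (intro sum.cong) auto
  also have "sum f (A - {b}) = sum f A - f b" using sum.remove[OF A b, of f] by simp
  finally show ?thesis by simp
qed

lemma row_l1_upd: "row_l1 (v + s *\<^sub>R axis b 1) = row_l1 v - \<bar>v$b\<bar> + \<bar>v$b + s\<bar>"
  unfolding row_l1_def by (rule trans[OF sum_upd[where b=b and f="\<lambda>k. \<bar>v$k\<bar>"]]) (auto simp: axis_comp)

lemma row_l1_ge: "\<bar>v$b\<bar> \<le> row_l1 v"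
  unfolding row_l1_def by (rule member_le_sum) auto

lemma row_l1_nonneg: "0 \<le> row_l1 v"
  unfolding row_l1_def by (rule sum_nonneg) auto

lemma Theta_l1_rows: "Theta_l1 M = (\<Sum>j\<in>UNIV. row_l1 (M$j) - \<bar>M$j$j\<bar>)"
  unfolding Theta_l1_def row_l1_def by (simp add: sum_diff1)

lemma lpen_sum: "Lpen lam bp bm Th = lam * (sum (($) bp) UNIV + sum (($) bm) UNIV) + (lam/2) * Theta_l1 Th"
  unfolding Lpen_def by (simp add: sum.distrib)

lemma sum_axis: "sum (($) (v + s *\<^sub>R axis j 1)) UNIV = sum (($) v) UNIV + (s::real)"
  by (simp add: sum.distrib axis_comp sum_distrib_left[symmetric])

lemma quad_zero:
  fixes h c t :: real
  assumes t: "t > 0" and c: "c > 0" and all: "\<And>d. \<bar>d\<bar> \<le> t \<Longrightarrow> 0 \<le> - 2 * d * h + c * d^2"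
  shows "h = 0"
proof (rule ccontr)
  assume h: "h \<noteq> 0"
  define s where "s = min (t / \<bar>h\<bar>) (1 / c)"
  have s: "s > 0" using t c h by (simp add: s_def)
  have s1: "s \<le> 1 / c" by (simp add: s_def)
  have s2: "s \<le> t / \<bar>h\<bar>" by (simp add: s_def)
  have sc: "c * s \<le> 1" using c s1 by (simp add: pos_le_divide_eq mult.commute)
  have st: "s * \<bar>h\<bar> \<le> t" using h s2 by (simp add: pos_le_divide_eq)
  have "\<bar>s * h\<bar> \<le> t" using st s by (simp add: abs_mult)
  from all[OF this] have "0 \<le> h^2 * s * (c * s - 2)" by (simp add: power2_eq_square algebra_simps)
  moreover have "h^2 * s * (c * s - 2) < 0"
  proof (rule mult_pos_neg)
    show "h^2 * s > 0" using h s by simp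
    show "c * s - 2 < 0" using sc by simp
  qed
  ultimately show False by simp
qed

lemma arith2: fixes R e T P M L d h U b :: real
  assumes "(1/2)*R + (e/2)*(T + P + M) + L \<le> (1/2)*(R - 4*d*h + 4*d^2*U) + (e/2)*(T + (P + 2*d*b + d^2) + (M - 2*d*b + d^2)) + L"
  shows "0 \<le> -2*d*h + (2*U + e)*d^2"
proof -
  have "(1/2)*(R - 4*d*h + 4*d^2*U) + (e/2)*(T + (P + 2*d*b + d^2) + (M - 2*d*b + d^2)) + L
     = ((1/2)*R + (e/2)*(T + P + M) + L) + (-2*d*h + (2*U + e)*d^2)"
    by (simp add: algebra_simps power2_eq_square)
  with assms show ?thesis by linarith
qed

lemma kkt_zero:
  fixes X :: "real^'p^'n"
  assumes eps: "eps > 0" and sol: "whl_solution X lam eps y b0 bp bm Th"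
    and eq: "bp$j = bm$j" and pos: "bp$j > 0"
  shows "inner (colv X j) (y - fitv X b0 bp bm Th) = 0"
proof -
  define u where "u = colv X j"
  define r where "r = y - fitv X b0 bp bm Th"
  define e where "e = (axis j 1 :: real^'p)"
  have feas: "whl_feasible bp bm Th" using sol by (simp add: whl_solution_def)
  have "inner u r = 0"
  proof (rule quad_zero[OF pos])
    show "0 < 2 * (norm u)^2 + eps" using eps by (simp add: add_nonneg_pos)
    fix d :: real assume d: "\<bar>d\<bar> \<le> bp$j"
    have f': "whl_feasible (bp + d *\<^sub>R e) (bm - d *\<^sub>R e) Th"
      using feas d eq unfolding whl_feasible_def e_def
      by (auto simp: axis_comp)
    have fit: "fitv X b0 (bp + d *\<^sub>R e) (bm - d *\<^sub>R e) Th = fitv X b0 bp bm Th + (2*d) *\<^sub>R u"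
    proof -
      have "inner (X$i) (bp + d *\<^sub>R e - (bm - d *\<^sub>R e)) = inner (X$i) (bp - bm) + 2 * d * X$i$j" for i
        by (simp only: inner_add_right inner_diff_right inner_scaleR_right e_def inner_axis) simp
      thus ?thesis by (simp add: vec_eq_iff fitv_nth u_def colv_def)
    qed
    have n1: "(norm (r - (2*d) *\<^sub>R u))^2 = (norm r)^2 - 4 * d * inner u r + 4 * d^2 * (norm u)^2"
      unfolding power2_norm_eq_inner by (simp add: inner_diff_left inner_diff_right inner_commute power2_eq_square algebra_simps)
    have n2: "(norm (bp + d *\<^sub>R e))^2 = (norm bp)^2 + 2 * d * bp$j + d^2"
      unfolding power2_norm_eq_inner by (simp add: e_def inner_add_left inner_add_right inner_axis inner_axis' inner_commute power2_eq_square algebra_simps)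
    have n3: "(norm (bm - d *\<^sub>R e))^2 = (norm bm)^2 - 2 * d * bm$j + d^2"
      unfolding power2_norm_eq_inner by (simp add: e_def inner_diff_left inner_diff_right inner_axis inner_axis' inner_commute power2_eq_square algebra_simps)
    have lp: "Lpen lam (bp + d *\<^sub>R e) (bm - d *\<^sub>R e) Th = Lpen lam bp bm Th"
    proof -
      have "bm - d *\<^sub>R e = bm + (-d) *\<^sub>R e" by simp
      thus ?thesis unfolding lpen_sum e_def using sum_axis[of bp d j] sum_axis[of bm "-d" j] by simp
    qed
    have "whl_objective X lam eps y b0 bp bm Th \<le> whl_objective X lam eps y b0 (bp + d *\<^sub>R e) (bm - d *\<^sub>R e) Th"
      using sol f' by (simp add: whl_solution_def)
    moreover have "y - fitv X b0 (bp + d *\<^sub>R e) (bm - d *\<^sub>R e) Th = r - (2*d) *\<^sub>R u"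
      unfolding fit r_def by simp
    ultimately have "(1/2) * (norm r)^2 + (eps/2) * ((norm Th)^2 + (norm bp)^2 + (norm bm)^2) + Lpen lam bp bm Th
       \<le> (1/2) * (norm (r - (2*d) *\<^sub>R u))^2 + (eps/2) * ((norm Th)^2 + (norm (bp + d *\<^sub>R e))^2 + (norm (bm - d *\<^sub>R e))^2) + Lpen lam bp bm Th"
      unfolding obj_eq lp r_def by simp
    thus "0 \<le> - 2 * d * inner u r + (2 * (norm u)^2 + eps) * d^2"
      unfolding n1 n2 n3 eq by (rule arith2)
  qed
  thus ?thesis by (simp add: u_def r_def)
qed

abbreviation Um :: "'p \<Rightarrow> 'p \<Rightarrow> real^'p^'p" where "Um a b \<equiv> axis a (axis b 1)"

lemma Um_nth: "(Th + s *\<^sub>R Um a b) $ r $ c = Th $ r $ c + (if r = a \<and> c = b then s else 0)"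
  by (simp add: axis_comp)

lemma Um_row: "(Th + s *\<^sub>R Um a b) $ r = Th $ r + (if r = a then s *\<^sub>R axis b 1 else 0)"
  by (simp add: vec_eq_iff axis_comp)

lemma inner_Um: "inner M (Um a b) = M $ a $ b"
  by (simp add: inner_axis)

lemma inner_Um_O: "inner (Um a b) (O_mat X i) = X$i$a * X$i$b"
  by (simp add: inner_axis' O_mat_def)

lemma norm_sq_add: "(norm (a + b))^2 = (norm a)^2 + 2 * inner a b + (norm (b::'a::real_inner))^2"
  unfolding power2_norm_eq_inner by (simp add: inner_add_left inner_add_right inner_commute)

lemma Theta_l1_upd:
  assumes ab: "a \<noteq> b"
  shows "Theta_l1 (Th + s *\<^sub>R Um a b) = Theta_l1 Th - \<bar>Th$a$b\<bar> + \<bar>Th$a$b + s\<bar>"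
proof -
  have "Theta_l1 (Th + s *\<^sub>R Um a b) = (\<Sum>r\<in>UNIV. row_l1 ((Th + s *\<^sub>R Um a b)$r) - \<bar>(Th + s *\<^sub>R Um a b)$r$r\<bar>)"
    by (rule Theta_l1_rows)
  also have "\<dots> = (\<Sum>r\<in>UNIV. row_l1 (Th$r) - \<bar>Th$r$r\<bar>) - (row_l1 (Th$a) - \<bar>Th$a$a\<bar>)
        + (row_l1 ((Th + s *\<^sub>R Um a b)$a) - \<bar>(Th + s *\<^sub>R Um a b)$a$a\<bar>)"
    by (rule sum_upd) (auto simp: axis_comp)
  also have "row_l1 ((Th + s *\<^sub>R Um a b)$a) = row_l1 (Th$a) - \<bar>Th$a$b\<bar> + \<bar>Th$a$b + s\<bar>"
    by (simp add: Um_row row_l1_upd)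
  also have "(Th + s *\<^sub>R Um a b)$a$a = Th$a$a" using ab by (simp add: axis_comp)
  finally show ?thesis by (simp add: Theta_l1_rows)
qed


lemma row_l1_mono: "(\<And>c. \<bar>v$c\<bar> \<le> \<bar>w$c\<bar>) \<Longrightarrow> row_l1 v \<le> row_l1 w"
  unfolding row_l1_def by (rule sum_mono) auto

lemma zero_contra:
  fixes X :: "real^'p^'n"
  assumes lam: "lam > 0" and eps: "eps \<ge> 0" and sol: "whl_solution X lam eps y b0 bp bm Th"
    and jk: "j \<noteq> k" and nz: "Th$j$k \<noteq> 0"
    and cj: "\<And>i. X$i$j = cj" and ck: "\<And>i. X$i$k = ck"
  shows False
proof -
  define a where "a = Th$j$k"
  define b where "b = Th$k$j"
  define Th1 where "Th1 = Th + (-a) *\<^sub>R Um j k"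
  define Th' where "Th' = Th1 + (-b) *\<^sub>R Um k j"
  define b0' where "b0' = b0 + (1/2) * (a + b) * cj * ck"
  have feas: "whl_feasible bp bm Th" using sol by (simp add: whl_solution_def)
  have nth': "Th'$r$c = (if (r = j \<and> c = k) \<or> (r = k \<and> c = j) then 0 else Th$r$c)" for r c
    using jk by (auto simp: Th'_def Th1_def axis_comp a_def b_def)
  have f': "whl_feasible bp bm Th'"
    unfolding whl_feasible_def
  proof (intro conjI allI)
    fix r
    show "Th'$r$r = 0" using feas jk by (simp add: nth' whl_feasible_def)
    have "row_l1 (Th'$r) \<le> row_l1 (Th$r)" by (rule row_l1_mono) (simp add: nth')
    thus "row_l1 (Th'$r) \<le> bp$r + bm$r" using feas unfolding whl_feasible_def by (meson order_trans)
    show "0 \<le> bp$r" "0 \<le> bm$r" using feas by (auto simp: whl_feasible_def)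
  qed
  have fit: "fitv X b0' bp bm Th' = fitv X b0 bp bm Th"
  proof -
    have h: "inner Th' (O_mat X i) = inner Th (O_mat X i) - a * (cj * ck) - b * (ck * cj)" for i
      by (simp add: Th'_def Th1_def inner_add_left inner_diff_left inner_Um_O cj ck)
    show ?thesis by (simp add: vec_eq_iff fitv_nth b0'_def h algebra_simps)
  qed
  have nT: "(norm Th')^2 \<le> (norm Th)^2"
  proof -
    have "Th' = Th + ((-a) *\<^sub>R Um j k + (-b) *\<^sub>R Um k j)" by (simp add: Th'_def Th1_def)
    moreover have "inner Th ((-a) *\<^sub>R Um j k + (-b) *\<^sub>R Um k j) = 0 - a^2 - b^2"
      by (simp add: inner_add_right inner_diff_right inner_minus_right inner_Um a_def b_def power2_eq_square)
    moreover have "(norm ((-a) *\<^sub>R Um j k + (-b) *\<^sub>R Um k j))^2 = a^2 + b^2"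
      using jk unfolding power2_norm_eq_inner by (simp add: inner_add_left inner_add_right inner_diff_left inner_diff_right inner_Um axis_comp power2_eq_square)
    ultimately show ?thesis by (simp add: norm_sq_add)
  qed
  have TL: "Theta_l1 Th' = Theta_l1 Th - \<bar>a\<bar> - \<bar>b\<bar>"
  proof -
    have "Theta_l1 Th1 = Theta_l1 Th - \<bar>a\<bar>" using Theta_l1_upd[OF jk, of Th "-a"] by (simp add: Th1_def a_def)
    moreover have "Th1$k$j = b" using jk by (simp add: Th1_def axis_comp b_def)
    ultimately show ?thesis using Theta_l1_upd[OF jk[symmetric], of Th1 "-b"] by (simp add: Th'_def)
  qed
  have "whl_objective X lam eps y b0 bp bm Th \<le> whl_objective X lam eps y b0' bp bm Th'"
    using sol f' by (simp add: whl_solution_def)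
  hence "(eps/2) * (norm Th)^2 + Lpen lam bp bm Th \<le> (eps/2) * (norm Th')^2 + Lpen lam bp bm Th'"
    unfolding obj_eq fit by (simp add: algebra_simps)
  moreover have "(eps/2) * (norm Th')^2 \<le> (eps/2) * (norm Th)^2" using nT eps by (intro mult_left_mono) auto
  moreover have "Lpen lam bp bm Th' = Lpen lam bp bm Th - (lam/2) * (\<bar>a\<bar> + \<bar>b\<bar>)"
    unfolding Lpen_def TL by (simp add: algebra_simps)
  moreover have "(lam/2) * (\<bar>a\<bar> + \<bar>b\<bar>) > 0" using lam nz by (simp add: a_def add_pos_nonneg)
  ultimately show False by linarith
qed


lemma arith3:
  fixes R e T P M L d h U c t th rho :: real
  assumes opt: "(1/2)*R + (e/2)*(T + P + M) + L \<le> (1/2)*(R - 2*c*h + c^2*U)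
        + (e/2)*((T + 2*(-d*th) + 2*d^2) + (P + 2*(-(d/2)*t) + (d^2/4 + d^2*rho^2)) + (M + 2*(-(d/2)*t) + (d^2/4 + d^2*(1-rho)^2))) + L"
    and ch: "c * h = d * \<bar>h\<bar>" and c2: "c^2 = d^2" and rr: "rho^2 + (1-rho)^2 = 1"
    and e: "e > 0" and d: "d > 0" and th: "th > 0" and t: "t \<ge> 0"
    and small: "d * (U/2 + 2*e) \<le> e * th / 2"
  shows False
proof -
  have "(1/2)*(R - 2*c*h + c^2*U)
        + (e/2)*((T + 2*(-d*th) + 2*d^2) + (P + 2*(-(d/2)*t) + (d^2/4 + d^2*rho^2)) + (M + 2*(-(d/2)*t) + (d^2/4 + d^2*(1-rho)^2))) + L
     = ((1/2)*R + (e/2)*(T + P + M) + L) + (- (c*h) + (1/2)*c^2*U + e*(- d*th + d^2 - d*t + d^2/4) + (e/2)*d^2*(rho^2 + (1-rho)^2))"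
    by (simp add: field_simps power2_eq_square)
  also have "\<dots> = ((1/2)*R + (e/2)*(T + P + M) + L) + (- d*\<bar>h\<bar> - e*d*t + d * (d * (U/2 + 2*e) - e * th) - e*d^2/4)"
    unfolding ch c2 rr by (simp add: algebra_simps power2_eq_square)
  finally have "0 \<le> - d*\<bar>h\<bar> - e*d*t + d * (d * (U/2 + 2*e) - e * th) - e*d^2/4" using opt by linarith
  moreover have "d*\<bar>h\<bar> \<ge> 0" "e*d*t \<ge> 0" "e*d^2/4 \<ge> 0" using d e t by simp_all
  moreover have "d * (d * (U/2 + 2*e) - e * th) < 0"
  proof (rule mult_pos_neg)
    show "0 < d" using d .
    have "e * th > 0" using e th by simp
    thus "d * (U/2 + 2*e) - e * th < 0" using small by linarith
  qed
  ultimately show False by linarith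
qed

lemma transfer_contra:
  fixes X :: "real^'p^'n"
  assumes lam: "lam \<ge> 0" and eps: "eps > 0" and sol: "whl_solution X lam eps y b0 bp bm Th"
    and jk: "j \<noteq> k" and nz: "Th$j$k \<noteq> 0"
    and eqj: "bp$j = bm$j" and bk: "bp$k = 0" and bmk: "bm$k = 0"
  shows False
proof -
  have feas: "whl_feasible bp bm Th" using sol by (simp add: whl_solution_def)
  have rowk: "Th$k$c = 0" for c
  proof -
    have "\<bar>Th$k$c\<bar> \<le> row_l1 (Th$k)" by (rule row_l1_ge)
    also have "\<dots> \<le> bp$k + bm$k" using feas by (simp add: whl_feasible_def)
    also have "\<dots> = 0" using bk bmk by simp
    finally show ?thesis by simp
  qed
  define a where "a = Th$j$k"
  define th where "th = \<bar>a\<bar>"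
  define sg where "sg = sgn a"
  have th: "th > 0" using nz by (simp add: th_def a_def)
  have sga: "sg * a = th" by (simp add: sg_def th_def sgn_mult_self_eq abs_sgn)
  have sg2: "sg * sg = 1" using nz by (simp add: sg_def a_def sgn_mult_self_eq)
  have asg: "a = sg * th" using sga sg2 by (metis mult.assoc mult_1)
  define t where "t = bp$j"
  have t2: "th \<le> 2 * t"
  proof -
    have "th \<le> row_l1 (Th$j)" unfolding th_def a_def by (rule row_l1_ge)
    also have "\<dots> \<le> bp$j + bm$j" using feas by (simp add: whl_feasible_def)
    finally show ?thesis using eqj by (simp add: t_def)
  qed
  have t0: "t \<ge> 0" using th t2 by simp
  define u where "u = colv X k"
  define r where "r = y - fitv X b0 bp bm Th"
  define h where "h = inner u r"
  define U where "U = (norm u)^2"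
  define rho :: real where "rho = (if h \<ge> 0 then 1 else 0)"
  have rho_h: "(2*rho - 1) * h = \<bar>h\<bar>" by (simp add: rho_def)
  have rr: "rho^2 + (1-rho)^2 = 1" by (simp add: rho_def)
  have rho01: "0 \<le> rho" "rho \<le> 1" by (auto simp: rho_def)
  define C where "C = U/2 + 2*eps"
  have C: "C > 0" using eps by (simp add: C_def U_def add_nonneg_pos)
  define d where "d = min th (eps * th / (2 * C))"
  have d: "d > 0" using th eps C by (simp add: d_def)
  have dth: "d \<le> th" by (simp add: d_def)
  have small: "d * (U/2 + 2*eps) \<le> eps * th / 2"
  proof -
    have "d \<le> eps * th / (2 * C)" by (simp add: d_def)
    hence "d * C \<le> eps * th / (2 * C) * C" using C by (intro mult_right_mono) auto
    also have "eps * th / (2 * C) * C = eps * th / 2" using C by simp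
    finally show ?thesis by (simp add: C_def)
  qed
  define ej where "ej = (axis j 1 :: real^'p)"
  define ek where "ek = (axis k 1 :: real^'p)"
  define Th1 where "Th1 = Th + (-(d* sg)) *\<^sub>R Um j k"
  define Th' where "Th' = Th1 + (d* sg) *\<^sub>R Um k j"
  define bp' where "bp' = bp + (-(d/2)) *\<^sub>R ej + (d*rho) *\<^sub>R ek"
  define bm' where "bm' = bm + (-(d/2)) *\<^sub>R ej + (d*(1-rho)) *\<^sub>R ek"
  have rowTh': "Th'$q = Th$q + (if q = j then (-(d* sg)) *\<^sub>R axis k 1 else 0) + (if q = k then (d* sg) *\<^sub>R axis j 1 else 0)" for q
    by (simp add: Th'_def Th1_def vec_eq_iff axis_comp)
  have bp'c: "bp'$q = bp$q - (if q = j then d/2 else 0) + (if q = k then d*rho else 0)" for q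
    by (simp add: bp'_def ej_def ek_def axis_comp)
  have bm'c: "bm'$q = bm$q - (if q = j then d/2 else 0) + (if q = k then d*(1-rho) else 0)" for q
    by (simp add: bm'_def ej_def ek_def axis_comp)
  have absjk: "\<bar>a + (-(d* sg))\<bar> = th - d"
  proof -
    have "a + (-(d* sg)) = sg * (th - d)" using asg by (simp add: algebra_simps)
    moreover have "\<bar>sg\<bar> = 1" using nz by (simp add: sg_def a_def abs_sgn_eq)
    ultimately show ?thesis using dth by (simp add: abs_mult)
  qed
  have abssg: "\<bar>d* sg\<bar> = d" using nz d by (simp add: sg_def a_def abs_mult abs_sgn_eq)
  have f': "whl_feasible bp' bm' Th'"
    unfolding whl_feasible_def
  proof (intro conjI allI)
    fix q
    show "Th'$q$q = 0" using feas jk by (simp add: rowTh' axis_comp whl_feasible_def)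
    show "0 \<le> bp'$q" using feas t2 dth rho01 d eqj by (auto simp: bp'c whl_feasible_def t_def bk)
    show "0 \<le> bm'$q" using feas t2 dth rho01 d eqj by (auto simp: bm'c whl_feasible_def t_def bmk)
    show "row_l1 (Th'$q) \<le> bp'$q + bm'$q"
    proof (cases "q = j")
      case True
      have "row_l1 (Th'$q) = row_l1 (Th$j) - th + (th - d)"
        using True jk absjk row_l1_upd[of "Th$j" "-(d * sg)" k] by (simp add: rowTh' th_def a_def)
      also have "\<dots> \<le> bp$j + bm$j - d" using feas by (simp add: whl_feasible_def)
      also have "\<dots> = bp'$q + bm'$q" using True jk by (simp add: bp'c bm'c)
      finally show ?thesis .
    next
      case False
      show ?thesis
      proof (cases "q = k")
        case True
        have "Th$k = 0" using rowk by (simp add: vec_eq_iff)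
        hence "row_l1 (Th'$q) = \<bar>d* sg\<bar>"
          using True jk by (simp add: rowTh' row_l1_def axis_comp abs_mult if_distrib cong: if_cong)
        also have "\<dots> = bp'$q + bm'$q" using True jk abssg by (simp add: bp'c bm'c bk bmk algebra_simps)
        finally show ?thesis by simp
      next
        case False
        thus ?thesis using \<open>q \<noteq> j\<close> feas by (simp add: rowTh' bp'c bm'c whl_feasible_def)
      qed
    qed
  qed
  have fit: "y - fitv X b0 bp' bm' Th' = r - (d*(2*rho - 1)) *\<^sub>R u"
  proof -
    have i1: "inner (X$i) (bp' - bm') = inner (X$i) (bp - bm) + d*(2*rho - 1) * X$i$k" for i
    proof -
      have "bp' - bm' = (bp - bm) + (d*(2*rho-1)) *\<^sub>R ek"
        by (simp add: vec_eq_iff bp'_def bm'_def algebra_simps)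
      thus ?thesis by (simp add: inner_add_right ek_def inner_axis)
    qed
    have i2: "inner Th' (O_mat X i) = inner Th (O_mat X i)" for i
      by (simp add: Th'_def Th1_def inner_add_left inner_diff_left inner_Um_O)
    have "fitv X b0 bp' bm' Th' $ i = fitv X b0 bp bm Th $ i + (d*(2*rho - 1)) * X$i$k" for i
      unfolding fitv_nth i1 i2 by (simp add: algebra_simps)
    thus ?thesis by (simp add: vec_eq_iff r_def u_def colv_def algebra_simps)
  qed
  have n1: "(norm (r - (d*(2*rho - 1)) *\<^sub>R u))^2 = (norm r)^2 - 2*(d*(2*rho - 1))*h + (d*(2*rho - 1))^2*U"
    unfolding power2_norm_eq_inner h_def U_def
    by (simp add: inner_diff_left inner_diff_right inner_commute power2_eq_square algebra_simps)
  have nT: "(norm Th')^2 = (norm Th)^2 + 2*(-d*th) + 2*d^2"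
  proof -
    have "Th' = Th + ((-(d* sg)) *\<^sub>R Um j k + (d* sg) *\<^sub>R Um k j)" by (simp add: Th'_def Th1_def)
    moreover have "inner Th ((-(d* sg)) *\<^sub>R Um j k + (d* sg) *\<^sub>R Um k j) = -d*th"
      using rowk sga by (simp add: inner_add_right inner_Um a_def algebra_simps)
    moreover have "(norm ((-(d* sg)) *\<^sub>R Um j k + (d* sg) *\<^sub>R Um k j))^2 = 2*d^2"
      using jk sg2 unfolding power2_norm_eq_inner
      by (simp add: inner_add_left inner_add_right inner_Um axis_comp power2_eq_square algebra_simps)
    ultimately show ?thesis by (simp add: norm_sq_add)
  qed
  have np: "(norm bp')^2 = (norm bp)^2 + 2*(-(d/2)*t) + (d^2/4 + d^2*rho^2)"
  proof -
    have "bp' = bp + ((-(d/2)) *\<^sub>R ej + (d*rho) *\<^sub>R ek)" by (simp add: bp'_def)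
    moreover have "inner bp ((-(d/2)) *\<^sub>R ej + (d*rho) *\<^sub>R ek) = -(d/2)*t"
      by (simp add: inner_add_right inner_diff_right ej_def ek_def inner_axis t_def bk)
    moreover have "(norm ((-(d/2)) *\<^sub>R ej + (d*rho) *\<^sub>R ek))^2 = d^2/4 + d^2*rho^2"
      using jk unfolding power2_norm_eq_inner
      by (simp add: ej_def ek_def inner_add_left inner_add_right inner_axis axis_comp power2_eq_square algebra_simps)
    ultimately show ?thesis by (simp add: norm_sq_add)
  qed
  have nm: "(norm bm')^2 = (norm bm)^2 + 2*(-(d/2)*t) + (d^2/4 + d^2*(1-rho)^2)"
  proof -
    have "bm' = bm + ((-(d/2)) *\<^sub>R ej + (d*(1-rho)) *\<^sub>R ek)" by (simp add: bm'_def)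
    moreover have "inner bm ((-(d/2)) *\<^sub>R ej + (d*(1-rho)) *\<^sub>R ek) = -(d/2)*t"
      using eqj by (simp add: inner_add_right inner_diff_right ej_def ek_def inner_axis t_def bmk)
    moreover have "(norm ((-(d/2)) *\<^sub>R ej + (d*(1-rho)) *\<^sub>R ek))^2 = d^2/4 + d^2*(1-rho)^2"
      using jk unfolding power2_norm_eq_inner
      by (simp add: ej_def ek_def inner_add_left inner_add_right inner_axis axis_comp power2_eq_square algebra_simps)
    ultimately show ?thesis by (simp add: norm_sq_add)
  qed
  have lp: "Lpen lam bp' bm' Th' = Lpen lam bp bm Th"
  proof -
    have s1: "sum (($) bp') UNIV = sum (($) bp) UNIV - d/2 + d*rho"
      unfolding bp'_def ej_def ek_def sum_axis by simp
    have s2: "sum (($) bm') UNIV = sum (($) bm) UNIV - d/2 + d*(1-rho)"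
      unfolding bm'_def ej_def ek_def sum_axis by simp
    have T1: "Theta_l1 Th1 = Theta_l1 Th - th + (th - d)"
      using Theta_l1_upd[OF jk, of Th "-(d* sg)"] absjk by (simp add: Th1_def th_def a_def)
    have "Th1$k$j = 0" using jk rowk by (simp add: Th1_def axis_comp)
    hence T2: "Theta_l1 Th' = Theta_l1 Th1 + d"
      using Theta_l1_upd[OF jk[symmetric], of Th1 "d* sg"] abssg by (simp add: Th'_def)
    show ?thesis unfolding lpen_sum s1 s2 T2 T1 by (simp add: algebra_simps)
  qed
  have "whl_objective X lam eps y b0 bp bm Th \<le> whl_objective X lam eps y b0 bp' bm' Th'"
    using sol f' by (simp add: whl_solution_def)
  hence "(1/2)*(norm r)^2 + (eps/2)*((norm Th)^2 + (norm bp)^2 + (norm bm)^2) + Lpen lam bp bm Th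
     \<le> (1/2)*((norm r)^2 - 2*(d*(2*rho - 1))*h + (d*(2*rho - 1))^2*U)
        + (eps/2)*(((norm Th)^2 + 2*(-d*th) + 2*d^2) + ((norm bp)^2 + 2*(-(d/2)*t) + (d^2/4 + d^2*rho^2))
        + ((norm bm)^2 + 2*(-(d/2)*t) + (d^2/4 + d^2*(1-rho)^2))) + Lpen lam bp bm Th"
    unfolding obj_eq fit n1 nT np nm lp r_def[symmetric] .
  moreover have "(d*(2*rho - 1)) * h = d * \<bar>h\<bar>" using rho_h by (simp add: mult.assoc)
  moreover have "(d*(2*rho - 1))^2 = d^2" by (simp add: rho_def)
  ultimately show False using arith3 rr eps d th t0 small by blast
qed

lemma const_col:
  assumes "\<not> nconst X m" shows "\<exists>c. \<forall>i. X$i$m = c"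
proof -
  have "\<exists>c. colv X m = c *\<^sub>R onev" using assms unfolding nconst_def by blast
  then obtain c where c: "colv X m = c *\<^sub>R onev" by blast
  have "X$i$m = c" for i
  proof -
    have "colv X m $ i = (c *\<^sub>R onev) $ i" using c by simp
    thus ?thesis by (simp add: colv_def onev_def)
  qed
  thus ?thesis by blast
qed

lemma det_lemma:
  fixes X :: "real^'p^'n"
  assumes lam: "lam > 0" and eps: "eps > 0" and sol: "whl_solution X lam eps y b0 bp bm Th"
    and jk: "j \<noteq> k" and nz: "Th$j$k \<noteq> 0"
    and bj: "bp$j - bm$j = 0" and bk: "bp$k - bm$k = 0"
  shows "(nconst X j \<and> y \<in> Zset X lam eps j) \<or> (nconst X k \<and> y \<in> Zset X lam eps k)"
proof -
  have feas: "whl_feasible bp bm Th" using sol by (simp add: whl_solution_def)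
  have eqj: "bp$j = bm$j" and eqk: "bp$k = bm$k" using bj bk by simp_all
  have "0 < \<bar>Th$j$k\<bar>" using nz by simp
  also have "\<bar>Th$j$k\<bar> \<le> row_l1 (Th$j)" by (rule row_l1_ge)
  also have "\<dots> \<le> bp$j + bm$j" using feas by (simp add: whl_feasible_def)
  finally have pj: "bp$j > 0" using eqj by simp
  have hj: "inner (colv X j) (y - fitv X b0 bp bm Th) = 0" by (rule kkt_zero[OF eps sol eqj pj])
  show ?thesis
  proof (cases "nconst X j")
    case True thus ?thesis using sol hj by (auto simp: Zset_def)
  next
    case False
    then obtain cj where cj: "\<And>i. X$i$j = cj" using const_col by blast
    have k0: "bp$k \<ge> 0" using feas by (simp add: whl_feasible_def)
    show ?thesis
    proof (cases "bp$k = 0")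
      case True
      hence False using transfer_contra[OF less_imp_le[OF lam] eps sol jk nz eqj True] eqk True by simp
      thus ?thesis ..
    next
      case False
      hence pk: "bp$k > 0" using k0 by simp
      have hk: "inner (colv X k) (y - fitv X b0 bp bm Th) = 0" by (rule kkt_zero[OF eps sol eqk pk])
      show ?thesis
      proof (cases "nconst X k")
        case True thus ?thesis using sol hk by (auto simp: Zset_def)
      next
        case False
        then obtain ck where ck: "\<And>i. X$i$k = ck" using const_col by blast
        have False using zero_contra[OF lam less_imp_le[OF eps] sol jk nz cj ck] .
        thus ?thesis ..
      qed
    qed
  qed
qed

lemma det_bad:
  fixes X :: "real^'p^'n"
  assumes lam: "lam > 0" and eps: "eps > 0" and sol: "whl_solution X lam eps y b0 bp bm Th"
    and bad: "\<not> weak_hierarchy bp bm Th"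
  shows "y \<in> (\<Union>m\<in>{m. nconst X m}. Zset X lam eps m)"
proof -
  obtain j k where jk: "j \<noteq> k" and s: "(Th$j$k + Th$k$j) / 2 \<noteq> 0"
    and bj: "bp$j - bm$j = 0" and bk: "bp$k - bm$k = 0"
    using bad unfolding weak_hierarchy_def by blast
  show ?thesis
  proof (cases "Th$j$k = 0")
    case False
    from det_lemma[OF lam eps sol jk False bj bk] show ?thesis by blast
  next
    case True
    hence nz: "Th$k$j \<noteq> 0" using s by simp
    from det_lemma[OF lam eps sol jk[symmetric] nz bk bj] show ?thesis by blast
  qed
qed

theorem mainTheorem3:
  fixes X :: "real^'p^'n" and lam eps :: real
    and M :: "'w measure" and Y :: "'w \<Rightarrow> real^'n"
  assumes "lam > 0" and "eps > 0"
    and "prob_space M"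
    and "Y \<in> borel_measurable M"
    and "absolutely_continuous lborel (distr M lborel Y)"
  shows "AE w in M. \<forall>b0 bp bm Th. whl_solution X lam eps (Y w) b0 bp bm Th
                        \<longrightarrow> weak_hierarchy bp bm Th"
proof -
  note lam = assms(1) and eps = assms(2) and Ym = assms(4) and ac = assms(5)
  define N where "N = (\<Union>m\<in>{m. nconst X m}. closure (Zset X lam eps m))"
  have Nnull: "N \<in> null_sets lborel"
    unfolding N_def by (rule null_sets_UN') (auto intro: Z_null[OF less_imp_le[OF lam] eps])
  have Nsets: "N \<in> sets lborel" using Nnull by (simp add: null_sets_def)
  have Ym': "Y \<in> measurable M lborel" using Ym by simp
  have "N \<in> null_sets (distr M lborel Y)" using ac Nnull by (auto simp: absolutely_continuous_def)
  hence "emeasure (distr M lborel Y) N = 0" by (simp add: null_sets_def)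
  hence e0: "emeasure M (Y -` N \<inter> space M) = 0" using Nsets Ym' by (simp add: emeasure_distr)
  have "Y -` N \<inter> space M \<in> sets M" using Nsets Ym' by (simp add: measurable_sets)
  hence nM: "Y -` N \<inter> space M \<in> null_sets M" using e0 by (simp add: null_sets_def)
  show ?thesis
  proof (rule AE_I'[OF nM], rule subsetI)
    fix w assume "w \<in> {w \<in> space M. \<not> (\<forall>b0 bp bm Th. whl_solution X lam eps (Y w) b0 bp bm Th
                        \<longrightarrow> weak_hierarchy bp bm Th)}"
    then obtain b0 bp bm Th where w: "w \<in> space M" and sol: "whl_solution X lam eps (Y w) b0 bp bm Th"
      and bad: "\<not> weak_hierarchy bp bm Th" by blast
    have "Y w \<in> (\<Union>m\<in>{m. nconst X m}. Zset X lam eps m)" by (rule det_bad[OF lam eps sol bad])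
    hence "Y w \<in> N" unfolding N_def using closure_subset by blast
    thus "w \<in> Y -` N \<inter> space M" using w by simp
  qed
qed

end
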